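(* Let $X$ be a compact Hausdorff space. Then $X$ is discrete homogeneous if and only if $X$ is $n$-homogeneous for every positive integer $n$; and $X$ is strongly discrete homogeneous if and only if $X$ is strongly $n$-homogeneous for every positive integer $n$.
   Context: $X$ is $n$-homogeneous if for any two subsets $A,B\subseteq X$ of cardinality $n$ there is a homeomorphism $f\colon X\to X$ with $f(A)=B$; it is strongly $n$-homogeneous if every bijection between subsets of cardinality $n$ extends to a homeomorphism $X\to X$. A subset $D$ of $X$ is discrete if each point of $X$ has a neighbourhood containing at most one point of $D$. A Hausdorff space $X$ is discrete homogeneous (DH) if for any two discrete subsets $A,B$ with $|A|=|B|$ there is a homeomorphism $f\colon X\to X$ with $f(A)=B$; it is strongly discrete homogeneous (sDH) if for any two discrete subsets $A,B$ and any bijection $f\colon A\to B$, $f$ extends to a homeomorphism of $X$. *)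

theory Defs
  imports "HOL-Analysis.Analysis" "HOL-Library.Equipollence"
begin

definition n_homogeneous :: "'a topology \<Rightarrow> nat \<Rightarrow> bool" where
  "n_homogeneous X n \<longleftrightarrow>
     (\<forall>A B. A \<subseteq> topspace X \<and> B \<subseteq> topspace X \<and> finite A \<and> finite B
            \<and> card A = n \<and> card B = n
        \<longrightarrow> (\<exists>f. homeomorphic_map X X f \<and> f ` A = B))"

definition strongly_n_homogeneous :: "'a topology \<Rightarrow> nat \<Rightarrow> bool" where
  "strongly_n_homogeneous X n \<longleftrightarrow>
     (\<forall>A B g. A \<subseteq> topspace X \<and> B \<subseteq> topspace X \<and> finite A \<and> finite B
            \<and> card A = n \<and> card B = n \<and> bij_betw g A B
        \<longrightarrow> (\<exists>f. homeomorphic_map X X f \<and> (\<forall>x\<in>A. f x = g x)))"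

definition discrete_subset :: "'a topology \<Rightarrow> 'a set \<Rightarrow> bool" where
  "discrete_subset X D \<longleftrightarrow> D \<subseteq> topspace X \<and>
     (\<forall>x\<in>topspace X. \<exists>U. openin X U \<and> x \<in> U \<and>
        (\<forall>a\<in>U \<inter> D. \<forall>b\<in>U \<inter> D. a = b))"

definition discrete_homogeneous :: "'a topology \<Rightarrow> bool" where
  "discrete_homogeneous X \<longleftrightarrow> Hausdorff_space X \<and>
     (\<forall>A B. discrete_subset X A \<and> discrete_subset X B \<and> A \<approx> B
        \<longrightarrow> (\<exists>f. homeomorphic_map X X f \<and> f ` A = B))"

definition strongly_discrete_homogeneous :: "'a topology \<Rightarrow> bool" where
  "strongly_discrete_homogeneous X \<longleftrightarrow> Hausdorff_space X \<and>
     (\<forall>A B g. discrete_subset X A \<and> discrete_subset X B \<and> bij_betw g A B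
        \<longrightarrow> (\<exists>f. homeomorphic_map X X f \<and> (\<forall>x\<in>A. f x = g x)))"

end

theory Submission
  imports Defs
begin

lemma disc_finite:
  assumes "compact_space X" "discrete_subset X D"
  shows "finite D"
proof -
  have D: "D \<subseteq> topspace X" using assms(2) by (simp add: discrete_subset_def)
  obtain U where U: "\<And>x. x \<in> topspace X \<Longrightarrow> openin X (U x) \<and> x \<in> U x \<and>
        (\<forall>a\<in>U x \<inter> D. \<forall>b\<in>U x \<inter> D. a = b)"
    using assms(2) unfolding discrete_subset_def by metis
  have "compactin X (topspace X)" using assms(1) by (simp add: compact_space_def)
  moreover have "\<forall>V\<in>U ` topspace X. openin X V" using U by auto
  moreover have "topspace X \<subseteq> \<Union>(U ` topspace X)" using U by blast
  ultimately obtain F where F: "finite F" "F \<subseteq> U ` topspace X" "topspace X \<subseteq> \<Union>F"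
    unfolding compactin_def by meson
  then obtain T where T: "T \<subseteq> topspace X" "finite T" "F = U ` T"
    by (meson finite_subset_image)
  have sub: "D \<subseteq> (\<Union>t\<in>T. U t \<inter> D)" using D F T by blast
  have "finite (U t \<inter> D)" if "t \<in> T" for t
  proof -
    have "\<forall>a\<in>U t \<inter> D. \<forall>b\<in>U t \<inter> D. a = b" using U T that by blast
    then have "U t \<inter> D = {} \<or> (\<exists>a. U t \<inter> D = {a})" by blast
    then show ?thesis by auto
  qed
  then have "finite (\<Union>t\<in>T. U t \<inter> D)" using T by blast
  then show ?thesis using sub finite_subset by blast
qed

lemma finite_disc:
  assumes "Hausdorff_space X" "finite D" "D \<subseteq> topspace X"
  shows "discrete_subset X D"
  unfolding discrete_subset_def
proof (intro conjI ballI)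
  show "D \<subseteq> topspace X" by fact
  fix x assume x: "x \<in> topspace X"
  have "closedin X (D - {x})"
    using assms Hausdorff_imp_t1_space t1_space_closedin_finite by (metis Diff_subset finite_Diff order_trans)
  then have "openin X (topspace X - (D - {x}))" by blast
  moreover have "x \<in> topspace X - (D - {x})" using x by blast
  moreover have "\<forall>a\<in>(topspace X - (D - {x})) \<inter> D. \<forall>b\<in>(topspace X - (D - {x})) \<inter> D. a = b" by blast
  ultimately show "\<exists>U. openin X U \<and> x \<in> U \<and> (\<forall>a\<in>U \<inter> D. \<forall>b\<in>U \<inter> D. a = b)" by blast
qed

lemma disc_iff:
  assumes "compact_space X" "Hausdorff_space X"
  shows "discrete_subset X D \<longleftrightarrow> finite D \<and> D \<subseteq> topspace X"
  using assms disc_finite finite_disc discrete_subset_def by metis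

theorem mainTheorem11:
  fixes X :: "'a topology"
  assumes "compact_space X" and "Hausdorff_space X"
  shows "(discrete_homogeneous X \<longleftrightarrow> (\<forall>n::nat. n \<ge> 1 \<longrightarrow> n_homogeneous X n))
       \<and> (strongly_discrete_homogeneous X \<longleftrightarrow>
            (\<forall>n::nat. n \<ge> 1 \<longrightarrow> strongly_n_homogeneous X n))"
proof
  have idh: "homeomorphic_map X X id" by (simp add: homeomorphic_map_id)
  show "discrete_homogeneous X \<longleftrightarrow> (\<forall>n::nat. n \<ge> 1 \<longrightarrow> n_homogeneous X n)"
  proof
    assume H: "discrete_homogeneous X"
    show "\<forall>n::nat. n \<ge> 1 \<longrightarrow> n_homogeneous X n"
      unfolding n_homogeneous_def
    proof (intro allI impI, elim conjE)
      fix n A B assume "A \<subseteq> topspace X" "B \<subseteq> topspace X" "finite A" "finite B" "card A = n" "card B = n"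
      then show "\<exists>f. homeomorphic_map X X f \<and> f ` A = B"
        using H assms unfolding discrete_homogeneous_def
        by (metis disc_iff eqpoll_iff_card)
    qed
  next
    assume H: "\<forall>n::nat. n \<ge> 1 \<longrightarrow> n_homogeneous X n"
    show "discrete_homogeneous X"
      unfolding discrete_homogeneous_def
    proof (intro conjI allI impI, fact, elim conjE)
      fix A B assume a: "discrete_subset X A" "discrete_subset X B" "A \<approx> B"
      then have f: "finite A" "finite B" "A \<subseteq> topspace X" "B \<subseteq> topspace X" using disc_iff assms by metis+
      then have c: "card A = card B" using a eqpoll_iff_card by blast
      show "\<exists>f. homeomorphic_map X X f \<and> f ` A = B"
      proof (cases "card A = 0")
        case True
        then have "A = {}" "B = {}" using f c by auto
        then show ?thesis using idh by (intro exI[of _ id]) auto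
      next
        case False
        then show ?thesis using H f c unfolding n_homogeneous_def
          by (metis less_one linorder_not_less)
      qed
    qed
  qed
  show "strongly_discrete_homogeneous X \<longleftrightarrow> (\<forall>n::nat. n \<ge> 1 \<longrightarrow> strongly_n_homogeneous X n)"
  proof
    assume H: "strongly_discrete_homogeneous X"
    show "\<forall>n::nat. n \<ge> 1 \<longrightarrow> strongly_n_homogeneous X n"
      unfolding strongly_n_homogeneous_def
    proof (intro allI impI, elim conjE)
      fix n A B g assume "A \<subseteq> topspace X" "B \<subseteq> topspace X" "finite A" "finite B" "bij_betw g A B"
      then show "\<exists>f. homeomorphic_map X X f \<and> (\<forall>x\<in>A. f x = g x)"
        using H assms unfolding strongly_discrete_homogeneous_def
        by (metis disc_iff)
    qed
  next
    assume H: "\<forall>n::nat. n \<ge> 1 \<longrightarrow> strongly_n_homogeneous X n"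
    show "strongly_discrete_homogeneous X"
      unfolding strongly_discrete_homogeneous_def
    proof (intro conjI allI impI, fact, elim conjE)
      fix A B g assume a: "discrete_subset X A" "discrete_subset X B" "bij_betw g A B"
      then have f: "finite A" "finite B" "A \<subseteq> topspace X" "B \<subseteq> topspace X" using disc_iff assms by metis+
      then have c: "card A = card B" using a bij_betw_same_card by blast
      show "\<exists>f. homeomorphic_map X X f \<and> (\<forall>x\<in>A. f x = g x)"
      proof (cases "card A = 0")
        case True
        then have "A = {}" using f by auto
        then show ?thesis using idh by (intro exI[of _ id]) auto
      next
        case False
        then show ?thesis using H f c a(3) unfolding strongly_n_homogeneous_def
          by (metis less_one linorder_not_less)
      qed
    qed
  qed
qed

end
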